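(* Let $A$ be a finite nonempty subset of $(0,\infty)$ and let $g:A\to[0,\infty)$. Let $f=g\circ g$ be the function defined on $A_2=\{a\in A: g(a)\in A\}$ by $f(a)=g(g(a))$, and let $h_{g\circ g}=\{(f(a)/a,\,a): a\in A_2\}$. Then $h_{g\circ g}=g$ (i.e. $\{(g(g(a))/a,a):a\in A_2\}=\{(a,g(a)):a\in A\}$) if and only if $A$ has exactly one element and $f=\{(1,1)\}$ (equivalently $A=\{1\}$ and $g(1)=1$).
   Context: For a function $f$ on a finite set $B\subset(0,\infty)$, the Hirsch function $h_f$ is defined exactly at the points $f(b)/b$, $b\in B$, and maps $f(b)/b$ to $b$. Equality of functions means same domain and same values. *)

theory Defs
  imports Main "HOL.Real"
begin

definition graph_on :: "real set \<Rightarrow> (real \<Rightarrow> real) \<Rightarrow> (real \<times> real) set" where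
  "graph_on B f = {(b, f b) | b. b \<in> B}"

definition hirsch :: "real set \<Rightarrow> (real \<Rightarrow> real) \<Rightarrow> (real \<times> real) set" where
  "hirsch B f = {(f b / b, b) | b. b \<in> B}"

definition comp_dom :: "real set \<Rightarrow> (real \<Rightarrow> real) \<Rightarrow> real set" where
  "comp_dom A g = {a \<in> A. g a \<in> A}"

end

theory Submission
  imports Defs Complex_Main
begin

theorem theorem11:
  fixes A :: "real set" and g :: "real \<Rightarrow> real"
  assumes "finite A" and "A \<noteq> {}" and "\<forall>a\<in>A. a > 0"
    and "\<forall>a\<in>A. g a \<ge> 0"
  shows "hirsch (comp_dom A g) (g \<circ> g) = graph_on A g \<longleftrightarrow>
         (card A = 1 \<and> graph_on (comp_dom A g) (g \<circ> g) = {(1, 1)})"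
proof
  assume H: "hirsch (comp_dom A g) (g \<circ> g) = graph_on A g"
  have step: "g a \<in> A \<and> g (g a) \<in> A \<and> a = g (g (g a)) / g a" if "a \<in> A" for a
  proof -
    have "(a, g a) \<in> hirsch (comp_dom A g) (g \<circ> g)" using H that by (auto simp: graph_on_def)
    then show ?thesis by (auto simp: hirsch_def comp_dom_def)
  qed
  have pos: "g a > 0" if "a \<in> A" for a using step[OF that] assms(3) by auto
  have key: "g (g (g a)) = a * g a" if "a \<in> A" for a
    using step[OF that] pos[OF that] by (auto simp: field_simps)
  have surj: "g ` A = A"
  proof
    show "g ` A \<subseteq> A" using step by auto
    show "A \<subseteq> g ` A"
    proof
      fix b assume b: "b \<in> A"
      then have "b \<in> comp_dom A g" using step by (auto simp: comp_dom_def)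
      then have "(g (g b) / b, b) \<in> graph_on A g" using H by (auto simp: hirsch_def)
      then show "b \<in> g ` A" by (auto simp: graph_on_def)
    qed
  qed
  have inj: "inj_on g A" using surj assms(1) by (simp add: eq_card_imp_inj_on)
  define Q :: "real \<Rightarrow> real \<Rightarrow> real \<Rightarrow> real" where
    "Q = (\<lambda>x y z. - 2 * x^2 - y^2 - z^2 + 2*x*z + 2*y*z)"
  define V where "V = (\<lambda>a. Q (ln a) (ln (g a)) (ln (g (g a))))"
  have lnkey: "ln (g (g (g a))) = ln a + ln (g a)" if "a \<in> A" for a
  proof -
    have "a > 0" using assms(3) that by auto
    then show ?thesis using key[OF that] pos[OF that] by (simp add: ln_mult)
  qed
  have diff: "V (g a) - V a = (ln a)^2" if "a \<in> A" for a
    unfolding V_def Q_def using lnkey[OF that] by (simp add: power2_eq_square algebra_simps)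
  have "sum V A = sum (V \<circ> g) A" using sum.reindex[OF inj, of V] surj by simp
  then have "(\<Sum>a\<in>A. V (g a) - V a) = 0" by (simp add: sum_subtractf)
  then have "(\<Sum>a\<in>A. (ln a)^2) = 0" using diff by simp
  then have "\<forall>a\<in>A. (ln a)^2 = 0" using assms(1) by (simp add: sum_nonneg_eq_0_iff)
  then have one: "\<forall>a\<in>A. a = 1" using assms(3) by auto
  then have A1: "A = {1}" using assms(2) by auto
  then have g1: "g 1 = 1" using step by auto
  have "comp_dom A g = {1}" using A1 g1 by (auto simp: comp_dom_def)
  then show "card A = 1 \<and> graph_on (comp_dom A g) (g \<circ> g) = {(1, 1)}"
    using A1 g1 by (auto simp: graph_on_def)
next
  assume R: "card A = 1 \<and> graph_on (comp_dom A g) (g \<circ> g) = {(1, 1)}"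
  then obtain x where Ax: "A = {x}" by (auto simp: card_Suc_eq)
  have "(1,1) \<in> graph_on (comp_dom A g) (g \<circ> g)" using R by auto
  then have x1: "x = 1" and "g x \<in> A" using Ax by (auto simp: graph_on_def comp_dom_def)
  then have g1: "g 1 = 1" using Ax by auto
  have "comp_dom A g = {1}" using Ax x1 g1 by (auto simp: comp_dom_def)
  then show "hirsch (comp_dom A g) (g \<circ> g) = graph_on A g"
    using Ax x1 g1 by (auto simp: hirsch_def graph_on_def)
qed

end
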